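(* Let $0<q<1$, $\Sigma\sim\mathrm{Mallows}(\mathbb{Z},q)$, $I_n:=\{-n,\dots,n\}$ and $J_n:=\{-n+1,\dots,n\}$. Almost surely there exists a (random) $N\in\mathbb{N}$ such that $\Sigma_{I_n}(i)=\Sigma_{J_n}(i)=\Sigma(i)$ for all $n\ge N$ and all $i$ with $|i|\le n-\log^2 n$.
   Context: For a finite set $A\subseteq\mathbb{Z}$ and a bijection $\pi:A\to A$, $\mathrm{inv}(\pi)$ is the number of pairs $i<j$ in $A$ with $\pi(i)>\pi(j)$, and $\Pi_A\sim\mathrm{Mallows}(A,q)$ means $\mathbb{P}(\Pi_A=\pi)\propto q^{\mathrm{inv}(\pi)}$ over bijections $\pi$ of $A$. For a bijection $\sigma$ of a set $B\subseteq\mathbb{Z}$ and finite $A\subseteq B$, the pattern $\sigma_A:A\to A$ is defined by $\sigma_A(a)=a_{(i)}$ when $\sigma(a)$ is the $i$-th smallest element of $\sigma[A]$, where $a_{(i)}$ is the $i$-th smallest element of $A$. For $0<q<1$, $\mathrm{Mallows}(\mathbb{Z},q)$ is Gnedin and Olshanski's bi-infinite Mallows measure: the law of a random bijection $\Sigma$ of $\mathbb{Z}$ such that $\Sigma_I\sim\mathrm{Mallows}(I,q)$ for every finite interval of integers $I$, and, almost surely for every $i\in\mathbb{Z}$ one has $\Sigma_{I_n}(i)=\Sigma(i)$ for all sufficiently large $n$. It is also known that $\mathbb{P}(|\Sigma(i)-i|>m)=\Theta(q^m)$ uniformly in $i\in\mathbb{Z}$. *)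

theory Defs
  imports "HOL-Probability.Probability" "HOL-Combinatorics.Permutations"
begin

definition inversions :: "(int \<Rightarrow> int) \<Rightarrow> int set \<Rightarrow> nat" where
  "inversions \<pi> A = card {(i, j). i \<in> A \<and> j \<in> A \<and> i < j \<and> \<pi> i > \<pi> j}"

text \<open>Pattern sigma_A of sigma on the finite set A: sigma_A(a) is the (k+1)-th smallest
  element of A, where k is the number of b in A with sigma b < sigma a (i.e. sigma a is the
  (k+1)-th smallest element of sigma[A]).\<close>
definition pattern :: "(int \<Rightarrow> int) \<Rightarrow> int set \<Rightarrow> int \<Rightarrow> int" where
  "pattern \<sigma> A a =
     (if a \<in> A then sorted_list_of_set A ! card {b \<in> A. \<sigma> b < \<sigma> a} else a)"

text \<open>Bi-infinite Mallows(Z,q) law (Gnedin--Olshanski), as described in the paper: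
  Sigma is a random bijection of Z on the probability space M such that every pattern on a
  finite integer interval I is Mallows(I,q)-distributed, and almost surely, for every i,
  the pattern on I_n = {-n..n} evaluated at i equals Sigma(i) for all large n.\<close>
definition mallows_Z :: "'w measure \<Rightarrow> real \<Rightarrow> ('w \<Rightarrow> int \<Rightarrow> int) \<Rightarrow> bool" where
  "mallows_Z M q \<Sigma> \<longleftrightarrow>
     prob_space M \<and>
     (AE \<omega> in M. bij (\<Sigma> \<omega>)) \<and>
     (\<forall>a b :: int. \<forall>\<pi>. \<pi> permutes {a..b} \<longrightarrow>
        {\<omega> \<in> space M. pattern (\<Sigma> \<omega>) {a..b} = \<pi>} \<in> sets M \<and>
        measure M {\<omega> \<in> space M. pattern (\<Sigma> \<omega>) {a..b} = \<pi>} =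
          q ^ inversions \<pi> {a..b} / (\<Sum>\<tau> \<in> {\<tau>. \<tau> permutes {a..b}}. q ^ inversions \<tau> {a..b})) \<and>
     (AE \<omega> in M. \<forall>i. eventually (\<lambda>n::nat. pattern (\<Sigma> \<omega>) {- int n..int n} i = \<Sigma> \<omega> i) sequentially)"

end

theory Submission
  imports Defs
begin


definition invset :: "(int \<Rightarrow> int) \<Rightarrow> int set \<Rightarrow> (int \<times> int) set" where
  "invset \<pi> A = {(i, j). i \<in> A \<and> j \<in> A \<and> i < j \<and> \<pi> i > \<pi> j}"

lemma inversions_invset: "inversions \<pi> A = card (invset \<pi> A)"
  by (simp add: inversions_def invset_def)

lemma finite_invset: "finite A \<Longrightarrow> finite (invset \<pi> A)"
  by (rule finite_subset[of _ "A \<times> A"]) (auto simp: invset_def)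

definition cnt :: "(int \<Rightarrow> int) \<Rightarrow> int set \<Rightarrow> int \<Rightarrow> nat" where
  "cnt \<pi> A x = card {r \<in> A. x < r \<and> \<pi> r < \<pi> x}"

definition sval :: "(int \<Rightarrow> int) \<Rightarrow> int set \<Rightarrow> int \<Rightarrow> int" where
  "sval \<pi> A x = Max (\<pi> ` {r \<in> A. x < r \<and> \<pi> r < \<pi> x})"

definition swp :: "(int \<Rightarrow> int) \<Rightarrow> int set \<Rightarrow> int \<Rightarrow> (int \<Rightarrow> int)" where
  "swp \<pi> A x = \<pi> \<circ> Transposition.transpose x (inv \<pi> (sval \<pi> A x))"

lemma swp_facts:
  assumes p: "\<pi> permutes A" and fin: "finite A" and xA: "x \<in> A" and c: "cnt \<pi> A x \<ge> 1"
  defines "k \<equiv> inv \<pi> (sval \<pi> A x)"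
  shows "k \<in> A" "x < k" "\<pi> k < \<pi> x" "\<pi> k = sval \<pi> A x"
    "\<And>r. r \<in> A \<Longrightarrow> x < r \<Longrightarrow> \<pi> r < \<pi> x \<Longrightarrow> \<pi> r \<le> \<pi> k"
proof -
  let ?R = "{r \<in> A. x < r \<and> \<pi> r < \<pi> x}"
  have finR: "finite ?R" using fin by auto
  have neR: "?R \<noteq> {}" using c unfolding cnt_def by (metis card.empty not_one_le_zero)
  have "sval \<pi> A x \<in> \<pi> ` ?R" unfolding sval_def using finR neR by (intro Max_in) auto
  then obtain r0 where r0: "r0 \<in> ?R" "\<pi> r0 = sval \<pi> A x" by auto
  have "k = r0" unfolding k_def using r0 permutes_inverses(2)[OF p] by metis
  then show "k \<in> A" "x < k" "\<pi> k < \<pi> x" "\<pi> k = sval \<pi> A x" using r0 by auto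
  show "\<And>r. r \<in> A \<Longrightarrow> x < r \<Longrightarrow> \<pi> r < \<pi> x \<Longrightarrow> \<pi> r \<le> \<pi> k"
    using \<open>k = r0\<close> r0 finR unfolding sval_def by (auto intro!: Max_ge)
qed

lemma swp_main:
  assumes p: "\<pi> permutes A" and fin: "finite A" and xA: "x \<in> A" and c: "cnt \<pi> A x \<ge> 1"
  shows "swp \<pi> A x permutes A" "inversions (swp \<pi> A x) A + 1 \<le> inversions \<pi> A"
    "cnt \<pi> A x \<le> cnt (swp \<pi> A x) A x + 1"
proof -
  define k where "k = inv \<pi> (sval \<pi> A x)"
  note F = swp_facts[OF p fin xA c, folded k_def]
  define t where "t = Transposition.transpose x k"
  define \<tau> where "\<tau> = \<pi> \<circ> t"
  have tau: "swp \<pi> A x = \<tau>" unfolding swp_def \<tau>_def t_def k_def by simp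
  have inj: "inj \<pi>" using p permutes_inj by blast
  have tx: "\<tau> x = \<pi> k" and tk: "\<tau> k = \<pi> x" and to: "\<And>r. r \<noteq> x \<Longrightarrow> r \<noteq> k \<Longrightarrow> \<tau> r = \<pi> r"
    by (auto simp: \<tau>_def t_def)
  have gap: "\<And>r. r \<in> A \<Longrightarrow> x < r \<Longrightarrow> r \<noteq> k \<Longrightarrow> \<pi> r < \<pi> k \<or> \<pi> r > \<pi> x"
  proof -
    fix r assume r: "r \<in> A" "x < r" "r \<noteq> k"
    have "\<pi> r \<noteq> \<pi> k" "\<pi> r \<noteq> \<pi> x" using r inj F(2) by (auto dest: injD)
    then show "\<pi> r < \<pi> k \<or> \<pi> r > \<pi> x" using F(5)[OF r(1,2)] by fastforce
  qed
  show "swp \<pi> A x permutes A" unfolding tau \<tau>_def t_def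
    by (rule permutes_compose[OF permutes_swap_id[OF xA F(1)] p])
  define P where "P = (\<lambda>(i::int, j::int). (i \<in> {x,k} \<and> x < j \<and> j < k) \<or> (j \<in> {x,k} \<and> x < i \<and> i < k))"
  define h where "h = (\<lambda>(i, j). if P (i, j) then (i, j) else (t i, t j))"
  have tP: "P (t i, t j) = P (i, j)" for i j
    using F(2) unfolding P_def t_def by (auto simp: Transposition.transpose_def)
  have hinto: "h ` invset \<tau> A \<subseteq> invset \<pi> A - {(x, k)}"
  proof
    fix z assume "z \<in> h ` invset \<tau> A"
    then obtain i j where ij: "(i, j) \<in> invset \<tau> A" "z = h (i, j)" by auto
    have iA: "i \<in> A" "j \<in> A" "i < j" "\<tau> i > \<tau> j" using ij(1) by (auto simp: invset_def)
    show "z \<in> invset \<pi> A - {(x, k)}"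
    proof (cases "P (i, j)")
      case True
      then have z: "z = (i, j)" using ij by (simp add: h_def)
      show ?thesis using True iA F gap tx tk to unfolding z invset_def P_def
        by (smt (verit, best) insert_iff mem_Collect_eq prod.simps(2) singletonD DiffI)
    next
      case False
      then have z: "z = (t i, t j)" using ij by (simp add: h_def)
      have tA: "t i \<in> A" "t j \<in> A" using iA F(1) xA unfolding t_def
        by (auto simp: Transposition.transpose_def)
      have "t i < t j \<and> \<pi> (t i) > \<pi> (t j) \<and> (t i, t j) \<noteq> (x, k)"
        using False iA F(1-4) tx tk to unfolding P_def t_def Transposition.transpose_def
        by (cases "i = x"; cases "i = k"; cases "j = x"; cases "j = k") auto
      then show ?thesis using tA unfolding z invset_def by auto
    qed
  qed
  have hinj: "inj_on h (invset \<tau> A)"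
  proof (rule inj_onI)
    fix z1 z2 assume z: "z1 \<in> invset \<tau> A" "z2 \<in> invset \<tau> A" "h z1 = h z2"
    obtain i1 j1 i2 j2 where e: "z1 = (i1, j1)" "z2 = (i2, j2)" by fastforce
    have tt: "t (t y) = y" for y unfolding t_def by simp
    show "z1 = z2"
    proof (cases "P z1"; cases "P z2")
      assume "P z1" "P z2" then show ?thesis using z e by (simp add: h_def)
    next
      assume a: "P z1" "\<not> P z2"
      then have "(i1, j1) = (t i2, t j2)" using z e by (simp add: h_def)
      then have "P (i2, j2)" using a e tP by metis
      then show ?thesis using a e by simp
    next
      assume a: "\<not> P z1" "P z2"
      then have "(i2, j2) = (t i1, t j1)" using z e by (simp add: h_def)
      then have "P (i1, j1)" using a e tP by metis
      then show ?thesis using a e by simp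
    next
      assume a: "\<not> P z1" "\<not> P z2"
      then have "(t i1, t j1) = (t i2, t j2)" using z e by (simp add: h_def)
      then have "t i1 = t i2" "t j1 = t j2" by auto
      then have "i1 = i2" "j1 = j2" using tt by metis+
      then show ?thesis using e by simp
    qed
  qed
  have xk: "(x, k) \<in> invset \<pi> A" using F xA by (auto simp: invset_def)
  have "card (invset \<tau> A) \<le> card (invset \<pi> A - {(x, k)})"
    using card_inj_on_le[OF hinj hinto] finite_invset[OF fin] by auto
  also have "\<dots> = card (invset \<pi> A) - 1" using xk finite_invset[OF fin] by simp
  finally show "inversions (swp \<pi> A x) A + 1 \<le> inversions \<pi> A"
    unfolding tau inversions_invset using xk finite_invset[OF fin]
    by (metis One_nat_def Suc_leI card_gt_0_iff empty_iff le_diff_conv2 add.commute)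
  have sub: "{r \<in> A. x < r \<and> \<pi> r < \<pi> x} - {k} \<subseteq> {r \<in> A. x < r \<and> \<tau> r < \<tau> x}"
    using gap to tx F by fastforce
  have "cnt \<pi> A x - 1 \<le> cnt \<tau> A x" unfolding cnt_def
    using card_mono[OF _ sub] fin F(1-3) by (simp add: card_Diff_singleton_if)
  then show "cnt \<pi> A x \<le> cnt (swp \<pi> A x) A x + 1" unfolding tau by linarith
qed

lemma swp_inj:
  assumes fin: "finite A" and xA: "x \<in> A"
  shows "inj_on (\<lambda>\<pi>. swp \<pi> A x) {\<pi>. \<pi> permutes A \<and> cnt \<pi> A x \<ge> 1}"
proof (rule inj_onI)
  fix \<pi>1 \<pi>2 assume a1: "\<pi>1 \<in> {\<pi>. \<pi> permutes A \<and> cnt \<pi> A x \<ge> 1}"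
    and a2: "\<pi>2 \<in> {\<pi>. \<pi> permutes A \<and> cnt \<pi> A x \<ge> 1}" and e: "swp \<pi>1 A x = swp \<pi>2 A x"
  define k1 where "k1 = inv \<pi>1 (sval \<pi>1 A x)"
  define k2 where "k2 = inv \<pi>2 (sval \<pi>2 A x)"
  have p1: "\<pi>1 permutes A" "cnt \<pi>1 A x \<ge> 1" and p2: "\<pi>2 permutes A" "cnt \<pi>2 A x \<ge> 1"
    using a1 a2 by auto
  note F1 = swp_facts[OF p1(1) fin xA p1(2), folded k1_def]
  note F2 = swp_facts[OF p2(1) fin xA p2(2), folded k2_def]
  have inj1: "inj \<pi>1" using p1 permutes_inj by blast
  have inj2: "inj \<pi>2" using p2 permutes_inj by blast
  have s1: "swp \<pi>1 A x = \<pi>1 \<circ> Transposition.transpose x k1" unfolding swp_def k1_def ..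
  have s2: "swp \<pi>2 A x = \<pi>2 \<circ> Transposition.transpose x k2" unfolding swp_def k2_def ..
  have gap1: "\<And>r. r \<in> A \<Longrightarrow> x < r \<Longrightarrow> r \<noteq> k1 \<Longrightarrow> \<pi>1 r < \<pi>1 k1 \<or> \<pi>1 r > \<pi>1 x"
  proof -
    fix r assume r: "r \<in> A" "x < r" "r \<noteq> k1"
    have "\<pi>1 r \<noteq> \<pi>1 k1" "\<pi>1 r \<noteq> \<pi>1 x" using r inj1 F1(2) by (auto dest: injD)
    then show "\<pi>1 r < \<pi>1 k1 \<or> \<pi>1 r > \<pi>1 x" using F1(5)[OF r(1,2)] by fastforce
  qed
  have gap2: "\<And>r. r \<in> A \<Longrightarrow> x < r \<Longrightarrow> r \<noteq> k2 \<Longrightarrow> \<pi>2 r < \<pi>2 k2 \<or> \<pi>2 r > \<pi>2 x"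
  proof -
    fix r assume r: "r \<in> A" "x < r" "r \<noteq> k2"
    have "\<pi>2 r \<noteq> \<pi>2 k2" "\<pi>2 r \<noteq> \<pi>2 x" using r inj2 F2(2) by (auto dest: injD)
    then show "\<pi>2 r < \<pi>2 k2 \<or> \<pi>2 r > \<pi>2 x" using F2(5)[OF r(1,2)] by fastforce
  qed
  have ev: "\<And>r. (\<pi>1 \<circ> Transposition.transpose x k1) r = (\<pi>2 \<circ> Transposition.transpose x k2) r"
    using e s1 s2 by metis
  have kk: "k1 = k2"
  proof (rule ccontr)
    assume ne: "k1 \<noteq> k2"
    have ex: "\<pi>1 k1 = \<pi>2 k2" using ev[of x] by simp
    have e1: "\<pi>1 k2 = \<pi>2 x" using ev[of k2] ne F2(2) by (auto simp: Transposition.transpose_def)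
    have e2: "\<pi>2 k1 = \<pi>1 x" using ev[of k1] ne F1(2) by (auto simp: Transposition.transpose_def)
    have "\<pi>2 x > \<pi>1 x" using gap1[OF F2(1) F2(2) ne[symmetric]] e1 ex F2(3) by auto
    moreover have "\<pi>1 x > \<pi>2 x" using gap2[OF F1(1) F1(2) ne] e2 ex F1(3) by auto
    ultimately show False by simp
  qed
  show "\<pi>1 = \<pi>2"
  proof
    fix r
    show "\<pi>1 r = \<pi>2 r" using ev[of "Transposition.transpose x k1 r"] kk by simp
  qed
qed

definition Wt :: "real \<Rightarrow> int set \<Rightarrow> ((int \<Rightarrow> int) set) \<Rightarrow> real" where
  "Wt q A S = (\<Sum>\<pi>\<in>S. q ^ inversions \<pi> A)"

lemma Wt_step:
  assumes fin: "finite A" and xA: "x \<in> A" and q: "0 \<le> q" "q \<le> 1"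
  shows "Wt q A {\<pi>. \<pi> permutes A \<and> cnt \<pi> A x \<ge> Suc j} \<le> q * Wt q A {\<pi>. \<pi> permutes A \<and> cnt \<pi> A x \<ge> j}"
proof -
  let ?S1 = "{\<pi>. \<pi> permutes A \<and> cnt \<pi> A x \<ge> Suc j}"
  let ?S0 = "{\<pi>. \<pi> permutes A \<and> cnt \<pi> A x \<ge> j}"
  let ?f = "\<lambda>\<pi>. swp \<pi> A x"
  have finP: "finite {\<pi>. \<pi> permutes A}" using finite_permutations[OF fin] .
  have fin0: "finite ?S0" by (rule finite_subset[OF _ finP]) auto
  have inj: "inj_on ?f ?S1" by (rule inj_on_subset[OF swp_inj[OF fin xA]]) auto
  have img: "?f ` ?S1 \<subseteq> ?S0"
  proof
    fix \<tau> assume "\<tau> \<in> ?f ` ?S1"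
    then obtain \<pi> where \<pi>: "\<pi> \<in> ?S1" "\<tau> = ?f \<pi>" by auto
    have c: "cnt \<pi> A x \<ge> 1" using \<pi> by auto
    note M = swp_main[OF _ fin xA c]
    show "\<tau> \<in> ?S0" using \<pi> M by fastforce
  qed
  have "Wt q A ?S1 \<le> (\<Sum>\<pi>\<in>?S1. q * q ^ inversions (?f \<pi>) A)"
    unfolding Wt_def
  proof (rule sum_mono)
    fix \<pi> assume \<pi>: "\<pi> \<in> ?S1"
    have c: "cnt \<pi> A x \<ge> 1" using \<pi> by auto
    have "inversions (?f \<pi>) A + 1 \<le> inversions \<pi> A" using swp_main[OF _ fin xA c] \<pi> by auto
    then have "q ^ inversions \<pi> A \<le> q ^ (inversions (?f \<pi>) A + 1)"
      using q by (intro power_decreasing) auto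
    then show "q ^ inversions \<pi> A \<le> q * q ^ inversions (?f \<pi>) A" by (simp add: mult.commute)
  qed
  also have "\<dots> = q * (\<Sum>\<tau>\<in>?f ` ?S1. q ^ inversions \<tau> A)"
    by (simp add: sum_distrib_left sum.reindex[OF inj])
  also have "\<dots> \<le> q * Wt q A ?S0" unfolding Wt_def
    using q img fin0 by (intro mult_left_mono sum_mono2) auto
  finally show ?thesis .
qed

lemma Wt_geom:
  assumes fin: "finite A" and xA: "x \<in> A" and q: "0 \<le> q" "q \<le> 1"
  shows "Wt q A {\<pi>. \<pi> permutes A \<and> cnt \<pi> A x \<ge> m} \<le> q ^ m * Wt q A {\<pi>. \<pi> permutes A}"
proof (induction m)
  case 0 then show ?case by simp
next
  case (Suc m)
  have "Wt q A {\<pi>. \<pi> permutes A \<and> cnt \<pi> A x \<ge> Suc m} \<le> q * Wt q A {\<pi>. \<pi> permutes A \<and> cnt \<pi> A x \<ge> m}"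
    by (rule Wt_step[OF fin xA q])
  also have "\<dots> \<le> q * (q ^ m * Wt q A {\<pi>. \<pi> permutes A})" using Suc q by (intro mult_left_mono) auto
  finally show ?case by (simp add: mult.assoc)
qed

lemma Wt_mono: "finite T \<Longrightarrow> S \<subseteq> T \<Longrightarrow> 0 \<le> q \<Longrightarrow> Wt q A S \<le> Wt q A T"
  unfolding Wt_def by (intro sum_mono2) auto

lemma disp_cnt:
  assumes p: "\<pi> permutes {a..b}" and xA: "x \<in> {a..b}"
  shows "\<pi> x - x \<le> int (cnt \<pi> {a..b} x)"
proof -
  let ?A = "{a..b}"
  let ?L = "{r \<in> ?A. \<pi> r < \<pi> x}"
  have inj: "inj \<pi>" using p permutes_inj by blast
  have pxA: "\<pi> x \<in> ?A" using permutes_in_image[OF p] xA by auto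
  have img: "\<pi> ` ?L = {a..\<pi> x - 1}"
  proof
    show "\<pi> ` ?L \<subseteq> {a..\<pi> x - 1}" using permutes_in_image[OF p] by fastforce
    show "{a..\<pi> x - 1} \<subseteq> \<pi> ` ?L"
    proof
      fix v assume v: "v \<in> {a..\<pi> x - 1}"
      then have vA: "v \<in> ?A" using pxA by auto
      obtain r where "r \<in> ?A" "\<pi> r = v" using vA permutes_image[OF p] by (metis imageE)
      then show "v \<in> \<pi> ` ?L" using v by force
    qed
  qed
  have cL: "card ?L = nat (\<pi> x - a)"
    using card_image[OF inj_on_subset[OF inj subset_UNIV], of ?L] img by simp
  have sub: "?L \<subseteq> {a..x - 1} \<union> {r \<in> ?A. x < r \<and> \<pi> r < \<pi> x}"
    by (auto, metis less_irrefl linorder_neqE_linordered_idom)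
  have "card ?L \<le> card {a..x - 1} + card {r \<in> ?A. x < r \<and> \<pi> r < \<pi> x}"
    by (rule order_trans[OF card_mono[OF _ sub] card_Un_le]) (auto intro: finite_subset[where B="{a..b}"])
  then have "nat (\<pi> x - a) \<le> nat (x - a) + cnt \<pi> ?A x" using cL by (simp add: cnt_def)
  then show ?thesis using xA pxA by auto
qed

lemma Wt_up:
  assumes xA: "x \<in> {a..b}" and q: "0 \<le> q" "q \<le> 1"
  shows "Wt q {a..b} {\<pi>. \<pi> permutes {a..b} \<and> \<pi> x \<ge> x + int m} \<le> q ^ m * Wt q {a..b} {\<pi>. \<pi> permutes {a..b}}"
proof -
  have fin: "finite {\<pi>. \<pi> permutes {a..b}}" by (rule finite_permutations) simp
  have "Wt q {a..b} {\<pi>. \<pi> permutes {a..b} \<and> \<pi> x \<ge> x + int m}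
      \<le> Wt q {a..b} {\<pi>. \<pi> permutes {a..b} \<and> cnt \<pi> {a..b} x \<ge> m}"
    using disp_cnt[OF _ xA] q by (intro Wt_mono finite_subset[OF _ fin]) force+
  also have "\<dots> \<le> q ^ m * Wt q {a..b} {\<pi>. \<pi> permutes {a..b}}"
    by (rule Wt_geom[OF _ xA q]) simp
  finally show ?thesis .
qed

definition rfl :: "(int \<Rightarrow> int) \<Rightarrow> (int \<Rightarrow> int)" where
  "rfl \<pi> = (\<lambda>r. - \<pi> (- r))"

lemma rfl_rfl [simp]: "rfl (rfl \<pi>) = \<pi>" by (simp add: rfl_def)

lemma rfl_permutes:
  assumes "\<pi> permutes {a..b}" shows "rfl \<pi> permutes {-b..-a}"
proof (rule bij_imp_permutes)
  have b1: "bij_betw uminus {-b..-a} {a..b}" by (rule bij_betwI[where g = uminus]) auto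
  have b2: "bij_betw uminus {a..b} {-b..-a}" by (rule bij_betwI[where g = uminus]) auto
  have "bij_betw (uminus \<circ> (\<pi> \<circ> uminus)) {-b..-a} {-b..-a}"
    by (rule bij_betw_trans[OF bij_betw_trans[OF b1 permutes_imp_bij[OF assms]] b2])
  then show "bij_betw (rfl \<pi>) {-b..-a} {-b..-a}" by (simp add: rfl_def comp_def)
  show "\<And>x. x \<notin> {-b..-a} \<Longrightarrow> rfl \<pi> x = x"
    using permutes_not_in[OF assms] by (auto simp: rfl_def)
qed

lemma rfl_inversions: "inversions (rfl \<pi>) {-b..-a} = inversions \<pi> {a..b}"
proof -
  let ?g = "\<lambda>(i::int, j::int). (- j, - i)"
  have "invset (rfl \<pi>) {-b..-a} = ?g ` invset \<pi> {a..b}"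
  proof
    show "invset (rfl \<pi>) {-b..-a} \<subseteq> ?g ` invset \<pi> {a..b}"
    proof
      fix z assume "z \<in> invset (rfl \<pi>) {-b..-a}"
      then obtain i j where z: "z = (i, j)" "(i, j) \<in> invset (rfl \<pi>) {-b..-a}" by (cases z) auto
      then have "(-j, -i) \<in> invset \<pi> {a..b}" by (auto simp: invset_def rfl_def)
      then show "z \<in> ?g ` invset \<pi> {a..b}" using z by force
    qed
    show "?g ` invset \<pi> {a..b} \<subseteq> invset (rfl \<pi>) {-b..-a}"
      by (auto simp: invset_def rfl_def)
  qed
  moreover have "inj ?g" by (auto simp: inj_def)
  ultimately show ?thesis unfolding inversions_invset
    by (simp add: card_image inj_on_subset[of ?g UNIV])
qed

lemma Wt_rfl:
  "Wt q {a..b} {\<pi>. \<pi> permutes {a..b} \<and> P \<pi>} = Wt q {-b..-a} {\<sigma>. \<sigma> permutes {-b..-a} \<and> P (rfl \<sigma>)}"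
  unfolding Wt_def
proof (rule sum.reindex_bij_witness[where i = rfl and j = rfl])
  fix \<sigma> assume "\<sigma> \<in> {\<sigma>. \<sigma> permutes {-b..-a} \<and> P (rfl \<sigma>)}"
  then show "rfl \<sigma> \<in> {\<pi>. \<pi> permutes {a..b} \<and> P \<pi>}"
    using rfl_permutes[of \<sigma> "-b" "-a"] by simp
next
  fix \<pi> assume "\<pi> \<in> {\<pi>. \<pi> permutes {a..b} \<and> P \<pi>}"
  then show "rfl \<pi> \<in> {\<sigma>. \<sigma> permutes {-b..-a} \<and> P (rfl \<sigma>)}"
    using rfl_permutes[of \<pi> a b] by simp
next
  fix \<pi> show "q ^ inversions (rfl \<pi>) {-b..-a} = q ^ inversions \<pi> {a..b}"
    using rfl_inversions[of \<pi>] by simp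
qed auto

lemma Wt_down:
  assumes yA: "y \<in> {a..b}" and q: "0 \<le> q" "q \<le> 1"
  shows "Wt q {a..b} {\<pi>. \<pi> permutes {a..b} \<and> \<pi> y \<le> y - int m} \<le> q ^ m * Wt q {a..b} {\<pi>. \<pi> permutes {a..b}}"
proof -
  have "Wt q {a..b} {\<pi>. \<pi> permutes {a..b} \<and> \<pi> y \<le> y - int m}
      = Wt q {-b..-a} {\<sigma>. \<sigma> permutes {-b..-a} \<and> rfl \<sigma> y \<le> y - int m}" by (rule Wt_rfl)
  also have "{\<sigma>. \<sigma> permutes {-b..-a} \<and> rfl \<sigma> y \<le> y - int m} = {\<sigma>. \<sigma> permutes {-b..-a} \<and> \<sigma> (-y) \<ge> -y + int m}"
    by (auto simp: rfl_def)
  also have "Wt q {-b..-a} \<dots> \<le> q ^ m * Wt q {-b..-a} {\<sigma>. \<sigma> permutes {-b..-a}}"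
    using yA by (intro Wt_up q) auto
  also have "Wt q {-b..-a} {\<sigma>. \<sigma> permutes {-b..-a}} = Wt q {a..b} {\<pi>. \<pi> permutes {a..b}}"
    using Wt_rfl[of q a b "\<lambda>_. True"] by simp
  finally show ?thesis .
qed

lemma Wt_pair:
  assumes xA: "x \<in> {a..b}" and yA: "y \<in> {a..b}" and xy: "x < y" and q: "0 \<le> q" "q \<le> 1"
  shows "Wt q {a..b} {\<pi>. \<pi> permutes {a..b} \<and> \<pi> x > \<pi> y} \<le> 2 * q ^ nat ((y - x) div 2) * Wt q {a..b} {\<pi>. \<pi> permutes {a..b}}"
proof -
  define m where "m = nat ((y - x) div 2)"
  have fin: "finite {\<pi>. \<pi> permutes {a..b}}" by (rule finite_permutations) simp
  have sub: "{\<pi>. \<pi> permutes {a..b} \<and> \<pi> x > \<pi> y} \<subseteq>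
     {\<pi>. \<pi> permutes {a..b} \<and> \<pi> x \<ge> x + int m} \<union> {\<pi>. \<pi> permutes {a..b} \<and> \<pi> y \<le> y - int m}"
    unfolding m_def using xy by auto
  have "Wt q {a..b} {\<pi>. \<pi> permutes {a..b} \<and> \<pi> x > \<pi> y} \<le>
     Wt q {a..b} ({\<pi>. \<pi> permutes {a..b} \<and> \<pi> x \<ge> x + int m} \<union> {\<pi>. \<pi> permutes {a..b} \<and> \<pi> y \<le> y - int m})"
    by (rule Wt_mono[OF _ sub q(1)]) (auto intro: finite_subset[OF _ fin])
  also have "\<dots> \<le> Wt q {a..b} {\<pi>. \<pi> permutes {a..b} \<and> \<pi> x \<ge> x + int m} + Wt q {a..b} {\<pi>. \<pi> permutes {a..b} \<and> \<pi> y \<le> y - int m}"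
    unfolding Wt_def using q fin
    by (subst sum_Un) (auto intro!: sum_nonneg intro: finite_subset[OF _ fin])
  also have "\<dots> \<le> q ^ m * Wt q {a..b} {\<pi>. \<pi> permutes {a..b}} + q ^ m * Wt q {a..b} {\<pi>. \<pi> permutes {a..b}}"
    by (intro add_mono Wt_up Wt_down xA yA q)
  finally show ?thesis unfolding m_def by simp
qed



definition rk :: "(int \<Rightarrow> int) \<Rightarrow> int set \<Rightarrow> int \<Rightarrow> nat" where
  "rk \<sigma> A i = card {k \<in> A. \<sigma> k < \<sigma> i}"

lemma pattern_formula:
  assumes "i \<in> {a..b}"
  shows "pattern \<sigma> {a..b} i = a + int (rk \<sigma> {a..b} i)"
proof -
  have sub: "{k \<in> {a..b}. \<sigma> k < \<sigma> i} \<subseteq> {a..b} - {i}" by auto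
  have "rk \<sigma> {a..b} i \<le> card ({a..b} - {i})" unfolding rk_def by (rule card_mono[OF _ sub]) auto
  then have "a + int (rk \<sigma> {a..b} i) \<le> b" using assms by auto
  then show ?thesis using assms unfolding pattern_def rk_def by simp
qed

lemma rk_mono: "finite A \<Longrightarrow> \<sigma> x \<le> \<sigma> y \<Longrightarrow> rk \<sigma> A x \<le> rk \<sigma> A y"
  unfolding rk_def by (rule card_mono) auto

lemma rk_strict: "finite A \<Longrightarrow> x \<in> A \<Longrightarrow> \<sigma> x < \<sigma> y \<Longrightarrow> rk \<sigma> A x < rk \<sigma> A y"
  unfolding rk_def by (rule psubset_card_mono) auto

lemma pattern_order:
  assumes inj: "inj \<sigma>" and xA: "x \<in> {a..b}" and yA: "y \<in> {a..b}" and ne: "x \<noteq> y"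
    and np: "\<not> (pattern \<sigma> {a..b} x > pattern \<sigma> {a..b} y)"
  shows "\<sigma> x < \<sigma> y"
proof (rule ccontr)
  assume "\<not> \<sigma> x < \<sigma> y"
  moreover have "\<sigma> x \<noteq> \<sigma> y" using inj ne by (auto dest: injD)
  ultimately have "\<sigma> y < \<sigma> x" by simp
  then have "rk \<sigma> {a..b} y < rk \<sigma> {a..b} x" using yA by (intro rk_strict) auto
  then show False using np pattern_formula[OF xA] pattern_formula[OF yA] by simp
qed

lemma pattern_permutes:
  assumes inj: "inj \<sigma>"
  shows "pattern \<sigma> {a..b} permutes {a..b}"
proof (rule bij_imp_permutes)
  have injo: "inj_on (pattern \<sigma> {a..b}) {a..b}"
  proof (rule inj_onI)
    fix x y assume xy: "x \<in> {a..b}" "y \<in> {a..b}" "pattern \<sigma> {a..b} x = pattern \<sigma> {a..b} y"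
    show "x = y"
    proof (rule ccontr)
      assume ne: "x \<noteq> y"
      have "\<not> (pattern \<sigma> {a..b} x > pattern \<sigma> {a..b} y)" "\<not> (pattern \<sigma> {a..b} y > pattern \<sigma> {a..b} x)"
        using xy by auto
      then show False using pattern_order[OF inj xy(1,2) ne] pattern_order[OF inj xy(2,1) ne[symmetric]] by simp
    qed
  qed
  have sub: "pattern \<sigma> {a..b} ` {a..b} \<subseteq> {a..b}"
  proof
    fix z assume "z \<in> pattern \<sigma> {a..b} ` {a..b}"
    then obtain i where i: "i \<in> {a..b}" "z = pattern \<sigma> {a..b} i" by auto
    have s: "{k \<in> {a..b}. \<sigma> k < \<sigma> i} \<subseteq> {a..b} - {i}" by auto
    have "rk \<sigma> {a..b} i \<le> card ({a..b} - {i})" unfolding rk_def by (rule card_mono[OF _ s]) auto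
    then show "z \<in> {a..b}" using i pattern_formula[OF i(1)] by auto
  qed
  show "bij_betw (pattern \<sigma> {a..b}) {a..b} {a..b}"
    unfolding bij_betw_def using injo endo_inj_surj[OF _ sub injo] by simp
  show "\<And>x. x \<notin> {a..b} \<Longrightarrow> pattern \<sigma> {a..b} x = x" unfolding pattern_def by auto
qed

lemma pattern_ext:
  assumes i: "i \<in> {a..b}" and lo: "\<sigma> (a - 1) < \<sigma> i" and hi: "\<sigma> i < \<sigma> (b + 1)"
  shows "pattern \<sigma> {a - 1..b + 1} i = pattern \<sigma> {a..b} i"
proof -
  have "{k \<in> {a - 1..b + 1}. \<sigma> k < \<sigma> i} = insert (a - 1) {k \<in> {a..b}. \<sigma> k < \<sigma> i}"
    using lo hi i by (auto; smt (verit))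
  moreover have "finite {k \<in> {a..b}. \<sigma> k < \<sigma> i}" "a - 1 \<notin> {k \<in> {a..b}. \<sigma> k < \<sigma> i}" by (auto intro: finite_subset[where B="{a..b}"])
  ultimately have "rk \<sigma> {a - 1..b + 1} i = rk \<sigma> {a..b} i + 1" unfolding rk_def by simp
  then show ?thesis using pattern_formula[of i "a - 1" "b + 1"] pattern_formula[OF i] i by simp
qed

lemma pattern_shrink:
  assumes i: "i \<in> {a + 1..b}" and lo: "\<sigma> a < \<sigma> i"
  shows "pattern \<sigma> {a + 1..b} i = pattern \<sigma> {a..b} i"
proof -
  have "{k \<in> {a..b}. \<sigma> k < \<sigma> i} = insert a {k \<in> {a + 1..b}. \<sigma> k < \<sigma> i}"
    using lo i by (auto; smt (verit))
  moreover have "finite {k \<in> {a + 1..b}. \<sigma> k < \<sigma> i}" "a \<notin> {k \<in> {a + 1..b}. \<sigma> k < \<sigma> i}" by (auto intro: finite_subset[where B="{a+1..b}"])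
  ultimately have "rk \<sigma> {a..b} i = rk \<sigma> {a + 1..b} i + 1" unfolding rk_def by simp
  then show ?thesis using pattern_formula[OF i] pattern_formula[of i a b] i by simp
qed



definition Ev :: "('w \<Rightarrow> int \<Rightarrow> int) \<Rightarrow> 'w measure \<Rightarrow> int \<Rightarrow> int \<Rightarrow> int \<Rightarrow> int \<Rightarrow> 'w set" where
  "Ev \<Sigma> M a b x y = {\<omega> \<in> space M. pattern (\<Sigma> \<omega>) {a..b} permutes {a..b} \<and>
      pattern (\<Sigma> \<omega>) {a..b} x > pattern (\<Sigma> \<omega>) {a..b} y}"

lemma Ev_union: "Ev \<Sigma> M a b x y =
  (\<Union>\<pi>\<in>{\<pi>. \<pi> permutes {a..b} \<and> \<pi> x > \<pi> y}. {\<omega> \<in> space M. pattern (\<Sigma> \<omega>) {a..b} = \<pi>})"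
  unfolding Ev_def by auto

lemma Ev_sets:
  assumes "mallows_Z M q \<Sigma>"
  shows "Ev \<Sigma> M a b x y \<in> sets M"
  unfolding Ev_union
  using assms unfolding mallows_Z_def
  by (intro sets.finite_UN) (auto intro: finite_subset[OF _ finite_permutations[of "{a..b}"]])

lemma Z_pos:
  assumes "0 < q"
  shows "Wt q {a..b} {\<pi>. \<pi> permutes {a..b}} \<ge> 1"
proof -
  have e: "{(i, j). i \<in> {a..b} \<and> j \<in> {a..b} \<and> i < j \<and> id i > id j} = {}" by auto
  have "inversions id {a..b} = 0" unfolding inversions_def e by simp
  then have "1 = q ^ inversions id {a..b}" by simp
  also have "\<dots> \<le> Wt q {a..b} {\<pi>. \<pi> permutes {a..b}}" unfolding Wt_def
    using assms permutes_id[of "{a..b}"] by (intro member_le_sum) (auto simp: finite_permutations id_def)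
  finally show ?thesis .
qed

lemma Ev_prob:
  assumes m: "mallows_Z M q \<Sigma>" and q: "0 < q" "q < 1"
    and xA: "x \<in> {a..b}" and yA: "y \<in> {a..b}" and xy: "x < y"
  shows "measure M (Ev \<Sigma> M a b x y) \<le> 2 * q ^ nat ((y - x) div 2)"
proof -
  let ?S = "{\<pi>. \<pi> permutes {a..b} \<and> \<pi> x > \<pi> y}"
  let ?Z = "Wt q {a..b} {\<pi>. \<pi> permutes {a..b}}"
  have finS: "finite ?S" by (rule finite_subset[OF _ finite_permutations[of "{a..b}"]]) auto
  have meas: "\<And>\<pi>. \<pi> \<in> ?S \<Longrightarrow> {\<omega> \<in> space M. pattern (\<Sigma> \<omega>) {a..b} = \<pi>} \<in> sets M
       \<and> measure M {\<omega> \<in> space M. pattern (\<Sigma> \<omega>) {a..b} = \<pi>} = q ^ inversions \<pi> {a..b} / ?Z"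
    using m unfolding mallows_Z_def Wt_def by auto
  have Z: "?Z \<ge> 1" using Z_pos q by blast
  have "measure M (Ev \<Sigma> M a b x y) \<le> (\<Sum>\<pi>\<in>?S. measure M {\<omega> \<in> space M. pattern (\<Sigma> \<omega>) {a..b} = \<pi>})"
    unfolding Ev_union using meas finS by (intro measure_UNION_le) auto
  also have "\<dots> = (\<Sum>\<pi>\<in>?S. q ^ inversions \<pi> {a..b} / ?Z)" using meas by (intro sum.cong) auto
  also have "\<dots> = Wt q {a..b} ?S / ?Z" unfolding Wt_def by (simp add: sum_divide_distrib)
  also have "\<dots> \<le> (2 * q ^ nat ((y - x) div 2) * ?Z) / ?Z"
    using Wt_pair[OF xA yA xy, of q] q Z by (intro divide_right_mono) auto
  also have "\<dots> = 2 * q ^ nat ((y - x) div 2)" using Z by simp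
  finally show ?thesis .
qed



definition Iset :: "real \<Rightarrow> nat \<Rightarrow> int set" where
  "Iset K n = {i. - int n \<le> i \<and> i \<le> int n \<and> real_of_int \<bar>i\<bar> \<le> real n - K * ln (real n)}"

definition Bn :: "('w \<Rightarrow> int \<Rightarrow> int) \<Rightarrow> 'w measure \<Rightarrow> real \<Rightarrow> nat \<Rightarrow> 'w set" where
  "Bn \<Sigma> M K n = (\<Union>i\<in>Iset K n. Ev \<Sigma> M (- int n - 1) (int n + 1) (- int n - 1) i
      \<union> Ev \<Sigma> M (- int n - 1) (int n + 1) i (int n + 1) \<union> Ev \<Sigma> M (- int n) (int n) (- int n) i)"

lemma finite_Iset: "finite (Iset K n)"
  by (rule finite_subset[of _ "{- int n..int n}"]) (auto simp: Iset_def)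

lemma card_Iset: "card (Iset K n) \<le> 2 * n + 1"
proof -
  have "card (Iset K n) \<le> card {- int n..int n}" by (rule card_mono) (auto simp: Iset_def)
  then show ?thesis by simp
qed

lemma Bn_sets: "mallows_Z M q \<Sigma> \<Longrightarrow> Bn \<Sigma> M K n \<in> sets M"
  unfolding Bn_def using finite_Iset by (intro sets.finite_UN sets.Un Ev_sets) auto

lemma pow_bound:
  assumes q: "0 < q" "q < 1" and d: "real_of_int d \<ge> l"
  shows "q ^ nat (d div 2) \<le> q powr ((l - 1) / 2)"
proof -
  have a: "2 * (d div 2) \<ge> d - 1" by presburger
  have "real_of_int (2 * (d div 2)) \<ge> real_of_int (d - 1)" using a by (simp only: of_int_le_iff)
  then have b: "real_of_int (d div 2) \<ge> (real_of_int d - 1) / 2" by simp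
  have "real (nat (d div 2)) \<ge> real_of_int (d div 2)" by (cases "d div 2 \<ge> 0") auto
  moreover have "(l - 1) / 2 \<le> (real_of_int d - 1) / 2" using d by (simp add: divide_right_mono)
  ultimately have "real (nat (d div 2)) \<ge> (l - 1) / 2" using b by linarith
  then have "q powr real (nat (d div 2)) \<le> q powr ((l - 1) / 2)" using q by (intro powr_mono') auto
  then show ?thesis using powr_realpow[OF q(1)] by simp
qed

lemma Bn_bound:
  assumes m: "mallows_Z M q \<Sigma>" and q: "0 < q" "q < 1" and l1: "K * ln (real n) \<ge> 1"
  shows "measure M (Bn \<Sigma> M K n) \<le> (2 * real n + 1) * 6 * q powr ((K * ln (real n) - 1) / 2)"
proof -
  let ?l = "K * ln (real n)"
  let ?g = "q powr ((?l - 1) / 2)"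
  let ?E1 = "\<lambda>i. Ev \<Sigma> M (- int n - 1) (int n + 1) (- int n - 1) i"
  let ?E2 = "\<lambda>i. Ev \<Sigma> M (- int n - 1) (int n + 1) i (int n + 1)"
  let ?E3 = "\<lambda>i. Ev \<Sigma> M (- int n) (int n) (- int n) i"
  have each: "measure M (?E1 i \<union> ?E2 i \<union> ?E3 i) \<le> 6 * ?g" if i: "i \<in> Iset K n" for i
  proof -
    have ib: "- int n \<le> i" "i \<le> int n" "real_of_int \<bar>i\<bar> \<le> real n - ?l" using i by (auto simp: Iset_def)
    have ai: "real_of_int (-i) \<le> real_of_int \<bar>i\<bar>" "real_of_int i \<le> real_of_int \<bar>i\<bar>"
      by auto
    have d1: "real_of_int (i - (- int n - 1)) \<ge> ?l" using ib(3) ai by simp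
    have d2: "real_of_int ((int n + 1) - i) \<ge> ?l" using ib(3) ai by simp
    have d3: "real_of_int (i - (- int n)) \<ge> ?l" using ib(3) ai by simp
    have x3: "- int n < i" using d3 l1 by linarith
    have m1: "measure M (?E1 i) \<le> 2 * ?g"
      using Ev_prob[OF m q, of "- int n - 1" "- int n - 1" "int n + 1" i] ib pow_bound[OF q d1] by auto
    have m2: "measure M (?E2 i) \<le> 2 * ?g"
      using Ev_prob[OF m q, of i "- int n - 1" "int n + 1" "int n + 1"] ib pow_bound[OF q d2] by auto
    have m3: "measure M (?E3 i) \<le> 2 * ?g"
      using Ev_prob[OF m q, of "- int n" "- int n" "int n" i] ib x3 pow_bound[OF q d3] by auto
    have s: "?E1 i \<in> sets M" "?E2 i \<in> sets M" "?E3 i \<in> sets M" using Ev_sets[OF m] by auto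
    have "measure M (?E1 i \<union> ?E2 i \<union> ?E3 i) \<le> measure M (?E1 i \<union> ?E2 i) + measure M (?E3 i)"
      using s by (intro measure_Un_le) auto
    also have "\<dots> \<le> measure M (?E1 i) + measure M (?E2 i) + measure M (?E3 i)"
      using s measure_Un_le[of "?E1 i" M "?E2 i"] by simp
    finally show ?thesis using m1 m2 m3 by simp
  qed
  have "measure M (Bn \<Sigma> M K n) \<le> (\<Sum>i\<in>Iset K n. measure M (?E1 i \<union> ?E2 i \<union> ?E3 i))"
    unfolding Bn_def using finite_Iset Ev_sets[OF m] by (intro measure_UNION_le) auto
  also have "\<dots> \<le> (\<Sum>i\<in>Iset K n. 6 * ?g)" by (rule sum_mono) (rule each)
  also have "\<dots> = real (card (Iset K n)) * (6 * ?g)" by simp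
  also have "\<dots> \<le> (2 * real n + 1) * (6 * ?g)"
    using card_Iset[of K n] q by (intro mult_right_mono) (auto simp del: of_nat_le_iff simp: of_nat_le_iff[symmetric])
  finally show ?thesis by (simp only: mult.assoc)
qed

lemma h_bound:
  assumes q: "0 < q" "q < 1" and K: "K = 8 / (- ln q)" and n: "n \<ge> 1"
  shows "(2 * real n + 1) * 6 * q powr ((K * ln (real n) - 1) / 2) \<le> 18 * exp (- ln q / 2) * inverse (real n ^ 2)"
proof -
  define c where "c = - ln q"
  have c: "c > 0" using q by (simp add: c_def)
  have n0: "real n > 0" using n by simp
  have "q powr ((K * ln (real n) - 1) / 2) = exp (((K * ln (real n) - 1) / 2) * ln q)"
    using q by (simp add: powr_def)
  also have "\<dots> = exp (c / 2) * exp (- (4 * ln (real n)))"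
    using c unfolding K c_def by (simp add: exp_add[symmetric] field_simps)
  also have "exp (- (4 * ln (real n))) = inverse (real n ^ 4)"
    using n0 ln_realpow[of "real n" 4] exp_ln[of "real n ^ 4"] by (simp add: exp_minus)
  finally have e: "q powr ((K * ln (real n) - 1) / 2) = exp (c / 2) * inverse (real n ^ 4)" .
  have x1: "real n \<ge> 1" using n by simp
  then have nn: "1 * real n \<le> real n * real n" by (intro mult_right_mono) auto
  have nn2: "real n \<le> real n * real n" using nn by simp
  have eq6: "(2 * real n + 1) * 6 = 12 * real n + 6" by simp
  have "(2 * real n + 1) * 6 \<le> 18 * real n ^ 2" using x1 nn2 eq6 unfolding power2_eq_square by linarith
  then have "(2 * real n + 1) * 6 * inverse (real n ^ 4) \<le> 18 * real n ^ 2 * inverse (real n ^ 4)"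
    by (intro mult_right_mono) auto
  also have "\<dots> = 18 * inverse (real n ^ 2)"
  proof -
    have "real n ^ 4 = real n ^ 2 * real n ^ 2" by (simp add: power_add[symmetric])
    then show ?thesis using n0 by (simp add: field_simps)
  qed
  finally have "(2 * real n + 1) * 6 * inverse (real n ^ 4) \<le> 18 * inverse (real n ^ 2)" .
  then have "(2 * real n + 1) * 6 * (exp (c / 2) * inverse (real n ^ 4)) \<le> 18 * exp (c/2) * inverse (real n ^ 2)"
  proof -
    assume h: "(2 * real n + 1) * 6 * inverse (real n ^ 4) \<le> 18 * inverse (real n ^ 2)"
    have "exp (c/2) * ((2 * real n + 1) * 6 * inverse (real n ^ 4)) \<le> exp (c/2) * (18 * inverse (real n ^ 2))"
      using h by (intro mult_left_mono) auto
    then show ?thesis by (simp only: mult_ac)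
  qed
  then show ?thesis unfolding e c_def by simp
qed



lemma good_omega:
  fixes \<sigma> :: "int \<Rightarrow> int" and K :: real
  assumes inj: "inj \<sigma>" and K: "K > 0"
    and H2: "\<forall>i. eventually (\<lambda>n::nat. pattern \<sigma> {- int n..int n} i = \<sigma> i) sequentially"
    and H3: "\<forall>n\<ge>N0. \<forall>i\<in>Iset K n.
        \<not> (pattern \<sigma> {- int n - 1..int n + 1} (- int n - 1) > pattern \<sigma> {- int n - 1..int n + 1} i) \<and>
        \<not> (pattern \<sigma> {- int n - 1..int n + 1} i > pattern \<sigma> {- int n - 1..int n + 1} (int n + 1)) \<and>
        \<not> (pattern \<sigma> {- int n..int n} (- int n) > pattern \<sigma> {- int n..int n} i)"
  shows "\<exists>N::nat. \<forall>n\<ge>N. \<forall>i::int.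
           real_of_int \<bar>i\<bar> \<le> real n - (ln (real n))\<^sup>2 \<longrightarrow>
             pattern \<sigma> {- int n..int n} i = \<sigma> i \<and>
             pattern \<sigma> {- int n + 1..int n} i = \<sigma> i"
proof -
  define T where "T = exp (K + 1 / K) + K + 1"
  define N where "N = max N0 (nat \<lceil>T\<rceil>)"
  have big: "ln (real m) \<ge> K + 1 / K" "real m \<ge> K + 1" if "m \<ge> N" for m
  proof -
    have "real m \<ge> T" using that unfolding N_def by linarith
    have e0: "exp (K + 1 / K) > 0" by simp
    have mT: "real m \<ge> exp (K + 1 / K)" "real m \<ge> K + 1"
      using \<open>real m \<ge> T\<close> e0 K unfolding T_def by linarith+
    have m0: "real m > 0" using mT(1) e0 by linarith
    show "ln (real m) \<ge> K + 1 / K" using mT(1) m0 by (subst ln_ge_iff) auto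
    show "real m \<ge> K + 1" using mT by simp
  qed
  have Kl1: "K * ln (real m) \<ge> 1" if "m \<ge> N" for m
  proof -
    have "K * ln (real m) \<ge> K * (K + 1 / K)" using big[OF that] K by (intro mult_left_mono) auto
    also have "K * (K + 1 / K) = K * K + 1" using K by (simp add: field_simps)
    moreover have "K * K \<ge> 0" by simp
    ultimately show ?thesis by linarith
  qed
  have Kle: "K * ln (real m) \<le> (ln (real m))\<^sup>2" if "m \<ge> N" for m
  proof -
    have "1 / K > 0" using K by simp
    then have "K \<le> ln (real m)" using big(1)[OF that] by linarith
    then show ?thesis using K by (simp add: power2_eq_square mult_right_mono)
  qed
  have step: "K * ln (real (Suc m)) \<le> K * ln (real m) + 1" if "m \<ge> N" for m
  proof -
    have m0: "real m > 0" using big(2)[OF that] K by linarith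
    have "ln (real (Suc m)) - ln (real m) = ln (real (Suc m) / real m)" using m0 by (simp add: ln_div)
    also have "\<dots> \<le> real (Suc m) / real m - 1" using m0 by (intro ln_le_minus_one) simp
    also have "\<dots> = 1 / real m" using m0 by (simp add: field_simps)
    finally have d: "ln (real (Suc m)) - ln (real m) \<le> 1 / real m" .
    have "K * (ln (real (Suc m)) - ln (real m)) \<le> K * (1 / real m)" using d K by (intro mult_left_mono) auto
    also have "\<dots> \<le> 1" using big(2)[OF that] m0 K by (simp add: field_simps)
    finally show ?thesis by (simp add: algebra_simps)
  qed
  have main: "pattern \<sigma> {- int n..int n} i = \<sigma> i \<and> pattern \<sigma> {- int n + 1..int n} i = \<sigma> i"
    if n: "n \<ge> N" and i: "real_of_int \<bar>i\<bar> \<le> real n - (ln (real n))\<^sup>2" for n i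
  proof -
    have A: "real_of_int \<bar>i\<bar> \<le> real (n + k) - K * ln (real (n + k))" for k
    proof (induction k)
      case 0 then show ?case using i Kle[OF n] by simp
    next
      case (Suc k)
      have "K * ln (real (Suc (n + k))) \<le> K * ln (real (n + k)) + 1" using step[of "n + k"] n by simp
      then show ?case using Suc by simp
    qed
    have inI: "i \<in> Iset K m" "- int m < i" if "m \<ge> n" for m
    proof -
      have a: "real_of_int \<bar>i\<bar> \<le> real m - K * ln (real m)" using A[of "m - n"] that by simp
      have "K * ln (real m) \<ge> 1" using Kl1[of m] that n by simp
      then have b: "real_of_int \<bar>i\<bar> \<le> real m - 1" using a by linarith
      have "real_of_int (- i) \<le> real_of_int \<bar>i\<bar>" "real_of_int i \<le> real_of_int \<bar>i\<bar>" by auto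
      then have "real_of_int (-i) \<le> real m - 1" "real_of_int i \<le> real m - 1" using b by linarith+
      then have "- i \<le> int m - 1" "i \<le> int m - 1" by linarith+
      then show "i \<in> Iset K m" "- int m < i" using a unfolding Iset_def by auto
    qed
    have B: "pattern \<sigma> {- int (n + k)..int (n + k)} i = pattern \<sigma> {- int n..int n} i" for k
    proof (induction k)
      case 0 then show ?case by simp
    next
      case (Suc k)
      define m where "m = n + k"
      have mN0: "m \<ge> N0" using n unfolding m_def N_def by simp
      have im: "i \<in> Iset K m" "- int m < i" using inI[of m] unfolding m_def by auto
      note h = H3[rule_format, OF mN0 im(1)]
      have iin: "i \<in> {- int m..int m}" using im unfolding Iset_def by auto
      have lo: "\<sigma> (- int m - 1) < \<sigma> i"
        by (rule pattern_order[OF inj _ _ _ h[THEN conjunct1]]) (use iin im in auto)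
      have hi: "\<sigma> i < \<sigma> (int m + 1)"
        by (rule pattern_order[OF inj _ _ _ h[THEN conjunct2, THEN conjunct1]]) (use iin in auto)
      have "pattern \<sigma> {- int m - 1..int m + 1} i = pattern \<sigma> {- int m..int m} i"
        using pattern_ext[OF iin] lo hi by simp
      moreover have S: "{- int (n + Suc k)..int (n + Suc k)} = {- int m - 1..int m + 1}" unfolding m_def by auto
      moreover have "pattern \<sigma> {- int m..int m} i = pattern \<sigma> {- int n..int n} i" using Suc unfolding m_def .
      ultimately show ?case by (simp only: S)
    qed
    obtain M0 where M0: "\<And>m. m \<ge> M0 \<Longrightarrow> pattern \<sigma> {- int m..int m} i = \<sigma> i"
      using H2[rule_format, of i] unfolding eventually_sequentially by blast
    have C: "pattern \<sigma> {- int n..int n} i = \<sigma> i"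
      using M0[of "n + M0"] B[of M0] by simp
    have nN0: "n \<ge> N0" using n unfolding N_def by simp
    have iI: "i \<in> Iset K n" "- int n < i" using inI[of n] by auto
    note h = H3[rule_format, OF nN0 iI(1)]
    have iin: "i \<in> {- int n..int n}" using iI unfolding Iset_def by auto
    have "\<sigma> (- int n) < \<sigma> i"
      by (rule pattern_order[OF inj _ _ _ h[THEN conjunct2, THEN conjunct2]]) (use iin iI in auto)
    then have D: "pattern \<sigma> {- int n + 1..int n} i = pattern \<sigma> {- int n..int n} i"
      using pattern_shrink[of i "- int n" "int n" \<sigma>] iin iI by auto
    show ?thesis using C D by simp
  qed
  show ?thesis using main by blast
qed



theorem lemma5p1:
  fixes M :: "'w measure" and q :: real and \<Sigma> :: "'w \<Rightarrow> int \<Rightarrow> int"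
  assumes "0 < q" and "q < 1"
    and "mallows_Z M q \<Sigma>"
  shows "AE \<omega> in M. \<exists>N::nat. \<forall>n\<ge>N. \<forall>i::int.
           real_of_int \<bar>i\<bar> \<le> real n - (ln (real n))\<^sup>2 \<longrightarrow>
             pattern (\<Sigma> \<omega>) {- int n..int n} i = \<Sigma> \<omega> i \<and>
             pattern (\<Sigma> \<omega>) {- int n + 1..int n} i = \<Sigma> \<omega> i"
proof -
  note q = assms(1,2) and m = assms(3)
  have ps: "prob_space M" and bijAE: "AE \<omega> in M. bij (\<Sigma> \<omega>)"
    and limAE: "AE \<omega> in M. \<forall>i. eventually (\<lambda>n::nat. pattern (\<Sigma> \<omega>) {- int n..int n} i = \<Sigma> \<omega> i) sequentially"
    using m unfolding mallows_Z_def by auto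
  interpret prob_space M by (rule ps)
  define c where "c = - ln q"
  define K where "K = 8 / c"
  have c: "c > 0" using q by (simp add: c_def)
  have K: "K > 0" using c by (simp add: K_def)
  define NT where "NT = nat \<lceil>exp (1 / K)\<rceil> + 1"
  have ev: "eventually (\<lambda>n. norm (measure M (Bn \<Sigma> M K n)) \<le> 18 * exp (- ln q / 2) * inverse (real n ^ 2)) sequentially"
    unfolding eventually_sequentially
  proof (intro exI allI impI)
    fix n assume n: "n \<ge> NT"
    have n1: "n \<ge> 1" using n unfolding NT_def by simp
    have "real n \<ge> exp (1 / K)" using n unfolding NT_def by linarith
    moreover have "real n > 0" using n1 by simp
    ultimately have "ln (real n) \<ge> 1 / K" by (subst ln_ge_iff) auto
    then have l1: "K * ln (real n) \<ge> 1" using K by (simp add: field_simps)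
    have "measure M (Bn \<Sigma> M K n) \<le> (2 * real n + 1) * 6 * q powr ((K * ln (real n) - 1) / 2)"
      by (rule Bn_bound[OF m q l1])
    also have "\<dots> \<le> 18 * exp (- ln q / 2) * inverse (real n ^ 2)"
      by (rule h_bound[OF q _ n1]) (simp add: K_def c_def)
    finally show "norm (measure M (Bn \<Sigma> M K n)) \<le> 18 * exp (- ln q / 2) * inverse (real n ^ 2)" by simp
  qed
  have summ: "summable (\<lambda>n. measure M (Bn \<Sigma> M K n))"
    by (rule summable_comparison_test_ev[OF ev summable_mult[OF inverse_power_summable]]) simp
  have BC: "AE \<omega> in M. eventually (\<lambda>n. \<omega> \<in> space M - Bn \<Sigma> M K n) sequentially"
    by (rule borel_cantelli_AE1[OF Bn_sets[OF m] _ summ]) (simp add: less_top[symmetric])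
  show ?thesis
    using bijAE limAE BC
  proof eventually_elim
    case (elim \<omega>)
    have inj: "inj (\<Sigma> \<omega>)" using elim(1) bij_is_inj by blast
    obtain N0 where N0: "\<And>n. n \<ge> N0 \<Longrightarrow> \<omega> \<in> space M - Bn \<Sigma> M K n"
      using elim(3) unfolding eventually_sequentially by blast
    have H3: "\<forall>n\<ge>N0. \<forall>i\<in>Iset K n.
        \<not> (pattern (\<Sigma> \<omega>) {- int n - 1..int n + 1} (- int n - 1) > pattern (\<Sigma> \<omega>) {- int n - 1..int n + 1} i) \<and>
        \<not> (pattern (\<Sigma> \<omega>) {- int n - 1..int n + 1} i > pattern (\<Sigma> \<omega>) {- int n - 1..int n + 1} (int n + 1)) \<and>
        \<not> (pattern (\<Sigma> \<omega>) {- int n..int n} (- int n) > pattern (\<Sigma> \<omega>) {- int n..int n} i)"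
    proof (intro allI impI ballI)
      fix n i assume n: "n \<ge> N0" and i: "i \<in> Iset K n"
      have o: "\<omega> \<in> space M" "\<omega> \<notin> Bn \<Sigma> M K n" using N0[OF n] by auto
      have p1: "pattern (\<Sigma> \<omega>) {- int n - 1..int n + 1} permutes {- int n - 1..int n + 1}"
        and p2: "pattern (\<Sigma> \<omega>) {- int n..int n} permutes {- int n..int n}"
        using pattern_permutes[OF inj] by auto
      show "\<not> (pattern (\<Sigma> \<omega>) {- int n - 1..int n + 1} (- int n - 1) > pattern (\<Sigma> \<omega>) {- int n - 1..int n + 1} i) \<and>
        \<not> (pattern (\<Sigma> \<omega>) {- int n - 1..int n + 1} i > pattern (\<Sigma> \<omega>) {- int n - 1..int n + 1} (int n + 1)) \<and>
        \<not> (pattern (\<Sigma> \<omega>) {- int n..int n} (- int n) > pattern (\<Sigma> \<omega>) {- int n..int n} i)"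
        using o i p1 p2 unfolding Bn_def Ev_def by blast
    qed
    show ?case by (rule good_omega[OF inj K elim(2) H3])
  qed
qed

end
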